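(* Let $\lambda\in\mathbb{C}$ and let $u,v:\mathbb{Z}^2\to\mathbb{C}$ satisfy, for all $(l,m)\in\mathbb{Z}^2$ (with all denominators nonzero), \[ \widetilde{\overline u}-u-\frac1{\widetilde u}+\frac1{\overline u}=0,\qquad u-\widetilde{\overline v}-\frac1{\overline u}+\frac{\lambda}{\widetilde v}=0, \] \[ (u-v)\Big(\frac1u+\widetilde v\Big)-1+\lambda=0,\qquad \frac1u-\frac{\lambda}{v}-\overline u+\overline v=0. \] Then $v$ satisfies, for all $(l,m)\in\mathbb{Z}^2$, \[ \big(v\,\overline v-\widetilde v\,\widetilde{\overline v}\big)^2+\big(v-\widetilde{\overline v}\big)\big(\overline v-\widetilde v\big)\big(\lambda-v\,\overline v\big)\big(\lambda-\widetilde v\,\widetilde{\overline v}\big)=0. \]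
   Context: Shift notation: for $f:\mathbb{Z}^2\to\mathbb{C}$, $f=f_{l,m}$, $\overline f=f_{l+1,m}$, $\widetilde f=f_{l,m+1}$, $\widetilde{\overline f}=f_{l+1,m+1}$. *)

theory Defs
  imports Complex_Main
begin

end

theory Submission
  imports Defs
begin

lemma core:
  fixes a b c d x y L :: complex
  assumes x0: "x \<noteq> 0" and y0: "y \<noteq> 0" and a0: "a \<noteq> 0" and c0: "c \<noteq> 0"
    and P1: "c*x^2 + (L - a*c)*x - a = 0"
    and P2: "d*y^2 + (L - b*d)*y - b = 0"
    and P3: "a*x*y - a*b*x - a + L*x = 0"
    and P4: "c*x*y - c*d*y - c + L*y = 0"
  shows "(a*b - c*d)^2 + (a-d)*(b-c)*(L-a*b)*(L-c*d) = 0"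
proof -
  have "x*(a*y - a*b - c*x + a*c) = (a*x*y - a*b*x - a + L*x) - (c*x^2 + (L - a*c)*x - a)"
    by (simp add: algebra_simps power2_eq_square)
  hence "x*(a*y - a*b - c*x + a*c) = 0" using P1 P3 by simp
  hence "a*y - a*b - c*x + a*c = 0" using x0 by simp
  hence P5: "a*y = a*b - a*c + c*x" by (simp add: algebra_simps)
  have "y*(b*c*x + b*L - c*d*y - c*L) = 0"
  proof -
    have "y*(b*c*x + b*L - c*d*y - c*L) = b*(c*x*y - c*d*y - c + L*y) - c*(d*y^2 + (L - b*d)*y - b)"
      by (simp add: algebra_simps power2_eq_square)
    thus ?thesis using P2 P4 by simp
  qed
  hence "b*c*x + b*L - c*d*y - c*L = 0" using y0 by simp
  hence P6: "b*c*x + b*L = c*d*y + c*L" by (simp add: algebra_simps)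
  define N where "N = a*b*c*d - a*c*c*d + a*c*L - a*b*L"
  define D where "D = c*(a*b - c*d)"
  have "a*(b*c*x + b*L) = c*d*(a*y) + a*c*L" using P6 by (simp add: algebra_simps)
  hence LL: "x*D = N" unfolding N_def D_def using P5 by (simp add: algebra_simps)
  have E0: "c*N^2 + (L - a*c)*N*D - a*D^2 = 0"
  proof -
    have "c*N^2 + (L - a*c)*N*D - a*D^2 = D^2*(c*x^2 + (L - a*c)*x - a)"
      unfolding LL[symmetric] by (simp add: algebra_simps power2_eq_square)
    thus ?thesis using P1 by simp
  qed
  have "c*N^2 + (L - a*c)*N*D - a*D^2 = - (a*c^2) * ((a*b - c*d)^2 + (a-d)*(b-c)*(L-a*b)*(L-c*d))"
    unfolding N_def D_def by (simp add: algebra_simps power2_eq_square)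
  with E0 a0 c0 show ?thesis by simp
qed

theorem mainTheorem4:
  fixes u v :: "int \<Rightarrow> int \<Rightarrow> complex" and lam :: complex
  assumes u_nz: "\<And>l m. u l m \<noteq> 0"
    and v_nz: "\<And>l m. v l m \<noteq> 0"
    and e1: "\<And>l m. u (l+1) (m+1) - u l m - 1 / u l (m+1) + 1 / u (l+1) m = 0"
    and e2: "\<And>l m. u l m - v (l+1) (m+1) - 1 / u (l+1) m + lam / v l (m+1) = 0"
    and e3: "\<And>l m. (u l m - v l m) * (1 / u l m + v l (m+1)) - 1 + lam = 0"
    and e4: "\<And>l m. 1 / u l m - lam / v l m - u (l+1) m + v (l+1) m = 0"
  shows "\<And>l m. (v l m * v (l+1) m - v l (m+1) * v (l+1) (m+1))\<^sup>2
      + (v l m - v (l+1) (m+1)) * (v (l+1) m - v l (m+1))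
        * (lam - v l m * v (l+1) m) * (lam - v l (m+1) * v (l+1) (m+1)) = 0"
proof -
  fix l m
  define a where "a = v l m"
  define b where "b = v (l+1) m"
  define c where "c = v l (m+1)"
  define d where "d = v (l+1) (m+1)"
  define x where "x = u l m"
  define y where "y = u (l+1) m"
  have x0: "x \<noteq> 0" and y0: "y \<noteq> 0" and a0: "a \<noteq> 0" and c0: "c \<noteq> 0" and d0: "d \<noteq> 0"
    using u_nz v_nz by (auto simp: a_def c_def d_def x_def y_def)
  have h3: "(x - a) * (1/x + c) - 1 + lam = 0" using e3[of l m] by (simp add: x_def a_def c_def)
  have "c*x^2 + (lam - a*c)*x - a = x * ((x - a) * (1/x + c) - 1 + lam)" using x0
    by (simp add: field_simps power2_eq_square)
  hence P1: "c*x^2 + (lam - a*c)*x - a = 0" using h3 by simp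
  have h3': "(y - b) * (1/y + d) - 1 + lam = 0" using e3[of "l+1" m] by (simp add: y_def b_def d_def)
  have "d*y^2 + (lam - b*d)*y - b = y * ((y - b) * (1/y + d) - 1 + lam)" using y0
    by (simp add: field_simps power2_eq_square)
  hence P2: "d*y^2 + (lam - b*d)*y - b = 0" using h3' by simp
  have h4: "1/x - lam/a - y + b = 0" using e4[of l m] by (simp add: x_def a_def y_def b_def)
  have "a*x*y - a*b*x - a + lam*x = - (a*x*(1/x - lam/a - y + b))" using x0 a0
    by (simp add: field_simps)
  hence P3: "a*x*y - a*b*x - a + lam*x = 0" using h4 by simp
  have h2: "x - d - 1/y + lam/c = 0" using e2[of l m] by (simp add: x_def d_def y_def c_def)
  have "c*x*y - c*d*y - c + lam*y = c*y*(x - d - 1/y + lam/c)" using y0 c0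
    by (simp add: field_simps)
  hence P4: "c*x*y - c*d*y - c + lam*y = 0" using h2 by simp
  have "(a*b - c*d)^2 + (a-d)*(b-c)*(lam-a*b)*(lam-c*d) = 0"
    by (rule core[OF x0 y0 a0 c0 P1 P2 P3 P4])
  thus "(v l m * v (l+1) m - v l (m+1) * v (l+1) (m+1))\<^sup>2
      + (v l m - v (l+1) (m+1)) * (v (l+1) m - v l (m+1))
        * (lam - v l m * v (l+1) m) * (lam - v l (m+1) * v (l+1) (m+1)) = 0"
    by (simp add: a_def b_def c_def d_def)
qed

end
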